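(* In the setting described in the context, there exists $N_0$ such that for every $(p,q)\in\mathbb{Z}^2$ with $|(p,q)|>N_0$ the lifted short arc $\widetilde s_{p,q}$ is defined and contained in $R$ (i.e.\ $s_{p,q}$ is $R$-close to $A$), and hence the short arc $s_{p,q}=\pi(\widetilde s_{p,q})$ is embedded in $M$. In particular, all but finitely many geodesics $\gamma_{p,q}$ have embedded short arcs.
   Context: Let $M=\mathbb{H}^3/\Gamma$ be a cusped orientable hyperbolic 3-manifold, $\Gamma\subset \mathrm{PSL}_2(\mathbb{C})$ discrete and torsion-free, with covering map $\pi:\mathbb{H}^3\to M$. Use the upper half-space model, points written $(z,h)$, $z\in\mathbb{C}$, $h>0$. Fix a cusp of $M$ and let $U$ be its maximal embedded horoball neighbourhood; its boundary $T$ is a torus with finitely many self-tangency points. Fix one such point $A$ (a "bumping point"). Normalise (by conjugating $\Gamma$) so that $\pi^{-1}(T)$ contains the horosphere $H_\infty=\{h=1\}$ and the horosphere $H_0$ centred at $0$ of Euclidean diameter $1$, which touch at $A_{0,0}=(0,1)\in\pi^{-1}(A)$. The stabiliser of $\infty$ in $\Gamma$ is generated by $a=\begin{pmatrix}1&t_\alpha\\0&1\end{pmatrix}$, $b=\begin{pmatrix}1&t_\beta\\0&1\end{pmatrix}$ with $t_\alpha,t_\beta$ $\mathbb{R}$-linearly independent. Let $b_{0,0}=x_0t_\alpha+y_0t_\beta$ with $x_0,y_0\in[0,1)$ not both $0$ be such that there is $g\in\Gamma$ with $g(H_0)=H_\infty$, $g(0)=\infty$, $g(A_{0,0})=(b_{0,0},1)$;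 then $g=\begin{pmatrix}cb_{0,0}&-1/c\\c&0\end{pmatrix}$ for some $c\in\mathbb{C}$. For $(p,q)\in\mathbb{Z}^2$ put $b_{p,q}=b_{0,0}+pt_\alpha+qt_\beta$, $g_{p,q}=a^pb^qg$, let $\widetilde\gamma_{p,q}$ be the axis of $g_{p,q}$ in $\mathbb{H}^3$ and $\gamma_{p,q}=\pi(\widetilde\gamma_{p,q})$ the corresponding closed geodesic of $M$. For $|(p,q)|$ large, $\widetilde\gamma_{p,q}$ (a Euclidean semicircle from $z_-$ to $z_+$, where $z_\pm$ are the fixed points of $g_{p,q}$ with $z_-\to0$) meets $H_\infty$ in exactly two points, $C_{p,q}=(c_{p,q},1)$ nearer $z_-$ and $D_{p,q}=(d_{p,q},1)$ nearer $z_+$. The lifted short arc is the geodesic segment $\widetilde s_{p,q}=[g_{p,q}^{-1}(D_{p,q}),C_{p,q}]\subset\widetilde\gamma_{p,q}$, and the short arc is $s_{p,q}=\pi(\widetilde s_{p,q})$. Let $R\subset\mathbb{H}^3$ be the set of points strictly closer to $A_{0,0}$ than to any other point of $\pi^{-1}(A)$; $s_{p,q}$ is called $R$-close to $A$ if $\widetilde s_{p,q}\subset R$. *)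

theory Defs
  imports "HOL-Analysis.Analysis"
begin

text \<open>Elements of SL(2,C) are represented as 2x2 complex matrices; a subgroup of
PSL(2,C) is represented by its full preimage in SL(2,C) (so it contains -I).\<close>

type_synonym cmat = "complex^2^2"

text \<open>Points of the upper half-space model: (z,h) with z complex, h > 0.\<close>
type_synonym hpt = "complex \<times> real"

definition mat2 :: "complex \<Rightarrow> complex \<Rightarrow> complex \<Rightarrow> complex \<Rightarrow> cmat" where
  "mat2 a b c d = (\<chi> i j. if i = 1 then (if j = 1 then a else b) else (if j = 1 then c else d))"

primrec mpow :: "cmat \<Rightarrow> nat \<Rightarrow> cmat" where
  "mpow g 0 = mat 1"
| "mpow g (Suc n) = g ** mpow g n"

definition H3 :: "hpt set" where
  "H3 = {x. snd x > 0}"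

text \<open>Poincare extension of the Moebius transformation of g to the upper half-space.\<close>
definition mob :: "cmat \<Rightarrow> hpt \<Rightarrow> hpt" where
  "mob g x = (let z = fst x; h = snd x;
      a = g$1$1; b = g$1$2; c = g$2$1; d = g$2$2;
      D = (cmod (c * z + d))\<^sup>2 + (cmod c)\<^sup>2 * h\<^sup>2
    in (((a * z + b) * cnj (c * z + d) + a * cnj c * complex_of_real (h\<^sup>2)) / complex_of_real D,
        h / D))"

definition hdist :: "hpt \<Rightarrow> hpt \<Rightarrow> real" where
  "hdist x y = arcosh (1 + ((cmod (fst x - fst y))\<^sup>2 + (snd x - snd y)\<^sup>2) / (2 * snd x * snd y))"

definition hseg :: "hpt \<Rightarrow> hpt \<Rightarrow> hpt set" where
  "hseg P Q = {X \<in> H3. hdist P X + hdist X Q = hdist P Q}"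

text \<open>Complete geodesic with distinct ideal endpoints u, v in C: the Euclidean
semicircle over the segment [u,v] orthogonal to C.\<close>
definition hline :: "complex \<Rightarrow> complex \<Rightarrow> hpt set" where
  "hline u v = {x. snd x > 0 \<and> fst x \<in> open_segment u v \<and>
       (cmod (fst x - (u + v) / 2))\<^sup>2 + (snd x)\<^sup>2 = (cmod (u - v))\<^sup>2 / 4}"

text \<open>Finite fixed points of the boundary action z \<mapsto> (az+b)/(cz+d), c \<noteq> 0.\<close>
definition bfix :: "cmat \<Rightarrow> complex \<Rightarrow> bool" where
  "bfix g z \<longleftrightarrow> g$2$1 * z\<^sup>2 + (g$2$2 - g$1$1) * z - g$1$2 = 0"

text \<open>Repelling (derivative of modulus > 1) and attracting fixed points.\<close>
definition rep_fix :: "cmat \<Rightarrow> complex \<Rightarrow> bool" where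
  "rep_fix g z \<longleftrightarrow> bfix g z \<and> cmod (g$2$1 * z + g$2$2) < 1"

definition att_fix :: "cmat \<Rightarrow> complex \<Rightarrow> bool" where
  "att_fix g z \<longleftrightarrow> bfix g z \<and> cmod (g$2$1 * z + g$2$2) > 1"

definition psl2_group :: "cmat set \<Rightarrow> bool" where
  "psl2_group G \<longleftrightarrow> (\<forall>g\<in>G. det g = 1) \<and> mat 1 \<in> G \<and> - mat 1 \<in> G \<and>
     (\<forall>g\<in>G. \<forall>k\<in>G. g ** k \<in> G) \<and> (\<forall>g\<in>G. matrix_inv g \<in> G)"

definition torsion_free :: "cmat set \<Rightarrow> bool" where
  "torsion_free G \<longleftrightarrow> (\<forall>g\<in>G. \<forall>n::nat. n \<ge> 1 \<longrightarrow> mpow g n \<in> {mat 1, - mat 1} \<longrightarrow> g \<in> {mat 1, - mat 1})"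

text \<open>Finite covolume: some Borel set of finite hyperbolic volume
(volume element |dz|^2 dh / h^3) has Gamma-translates covering H3.\<close>
definition finite_covolume :: "cmat set \<Rightarrow> bool" where
  "finite_covolume G \<longleftrightarrow> (\<exists>F. F \<in> sets lborel \<and> F \<subseteq> H3 \<and> (\<Union>g\<in>G. mob g ` F) = H3 \<and>
      (\<integral>\<^sup>+ x. indicator F x * ennreal (1 / (snd x)^3) \<partial>lborel) < \<infinity>)"

definition transl :: "complex \<Rightarrow> cmat" where
  "transl t = mat2 1 t 0 1"

definition Binf :: "hpt set" where "Binf = {x. snd x > 1}"
definition Hinf :: "hpt set" where "Hinf = {x. snd x = 1}"

definition H0 :: "hpt set" where
  "H0 = {x. snd x > 0 \<and> (cmod (fst x))\<^sup>2 + (snd x - 1/2)\<^sup>2 = 1/4}"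

definition Rregion :: "cmat set \<Rightarrow> hpt \<Rightarrow> hpt set" where
  "Rregion G P = {X \<in> H3. \<forall>g\<in>G. mob g P \<noteq> P \<longrightarrow> hdist X P < hdist X (mob g P)}"

text \<open>pi restricted to S is injective (S embeds in M = H3 / G).\<close>
definition embeds_mod :: "cmat set \<Rightarrow> hpt set \<Rightarrow> bool" where
  "embeds_mod G S \<longleftrightarrow> (\<forall>x\<in>S. \<forall>y\<in>S. (\<exists>g\<in>G. mob g x = y) \<longrightarrow> x = y)"

end

theory Submission
  imports Defs
begin

lemma mat2_nth: "mat2 a b c d $ 1 $ 1 = a" "mat2 a b c d $ 1 $ 2 = b"
  "mat2 a b c d $ 2 $ 1 = c" "mat2 a b c d $ 2 $ 2 = d"
  by (simp_all add: mat2_def)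

lemma mat2_eta: "(M::cmat) = mat2 (M$1$1) (M$1$2) (M$2$1) (M$2$2)"
  by (simp add: vec_eq_iff forall_2 mat2_def)

lemma mat2_mult: "mat2 a b c d ** mat2 a' b' c' d' = mat2 (a*a'+b*c') (a*b'+b*d') (c*a'+d*c') (c*b'+d*d')"
  by (simp add: vec_eq_iff forall_2 mat2_def matrix_matrix_mult_def sum_2)

lemma mat2_one: "mat 1 = mat2 1 0 0 1"
  by (simp add: vec_eq_iff forall_2 mat2_def mat_def)

lemma mat2_mone: "- mat 1 = mat2 (-1) 0 0 (-1)"
  by (simp add: vec_eq_iff forall_2 mat2_def mat_def)

lemma mat2_eq: "mat2 a b c d = mat2 a' b' c' d' \<longleftrightarrow> a = a' \<and> b = b' \<and> c = c' \<and> d = d'"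
  by (metis mat2_nth)

lemma det_mat2: "det (mat2 a b c d) = a*d - b*c"
  by (simp add: det_2 mat2_nth)

lemma matrix_inv_eq: fixes A B :: cmat assumes "A ** B = mat 1" "B ** A = mat 1"
  shows "matrix_inv A = B"
proof -
  have ex: "\<exists>A'. A ** A' = mat 1 \<and> A' ** A = mat 1" using assms by blast
  obtain A' where A': "A ** A' = mat 1" "A' ** A = mat 1" "matrix_inv A = A'"
    using someI_ex[OF ex] unfolding matrix_inv_def by blast
  have "A' = A' ** (A ** B)" using assms by simp
  also have "\<dots> = B" by (simp add: matrix_mul_assoc A')
  finally show ?thesis using A' by simp
qed

lemma transl_mult: "transl t ** mat2 a b c d = mat2 (a + t*c) (b + t*d) c d"
  by (simp add: transl_def mat2_mult)

lemma mob_id: "mob (mat 1) x = x" "mob (- mat 1) x = x"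
  by (auto simp: mob_def mat2_one mat2_mone mat2_nth Let_def)

lemma mob_snd: "snd (mob g x) = snd x / ((cmod (g$2$1 * fst x + g$2$2))\<^sup>2 + (cmod (g$2$1))\<^sup>2 * (snd x)\<^sup>2)"
  by (simp add: mob_def Let_def)

lemma c_ge1:
  assumes hb: "mob \<gamma> ` Binf = Binf \<or> mob \<gamma> ` Binf \<inter> Binf = {}"
    and c0: "\<gamma>$2$1 \<noteq> 0"
  shows "cmod (\<gamma>$2$1) \<ge> 1"
proof (rule ccontr)
  define c where "c = \<gamma>$2$1"
  define d where "d = \<gamma>$2$2"
  assume "\<not> 1 \<le> cmod (\<gamma>$2$1)"
  hence lt: "cmod c < 1" by (simp add: c_def)
  have cp: "cmod c > 0" using c0 by (simp add: c_def)
  have ht: "snd (mob \<gamma> (-d/c, h)) = 1 / ((cmod c)\<^sup>2 * h)" if "h > 0" for h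
  proof -
    have "\<gamma>$2$1 * (-d/c) + \<gamma>$2$2 = 0" using c0 by (simp add: c_def d_def)
    thus ?thesis using that by (simp add: mob_snd c_def power2_eq_square)
  qed
  have c2: "(cmod c)\<^sup>2 < 1" "(cmod c)\<^sup>2 > 0" using lt cp by (auto simp: power_less_one_iff)
  show False
  proof (cases "mob \<gamma> ` Binf = Binf")
    case True
    define h where "h = 1 / (cmod c)\<^sup>2 + 1"
    have h1: "h > 1" using c2 by (simp add: h_def)
    have "(-d/c, h) \<in> Binf" using h1 by (simp add: Binf_def)
    hence "mob \<gamma> (-d/c, h) \<in> Binf" using True by blast
    hence "1 / ((cmod c)\<^sup>2 * h) > 1" using ht[of h] h1 by (simp add: Binf_def)
    moreover have "(cmod c)\<^sup>2 * h = 1 + (cmod c)\<^sup>2" using c2 by (simp add: h_def field_simps)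
    ultimately show False using c2 by simp
  next
    case False
    hence dis: "mob \<gamma> ` Binf \<inter> Binf = {}" using hb by blast
    define h where "h = (1 / (cmod c)\<^sup>2 + 1)/2"
    have h1: "h > 1" using c2 by (simp add: h_def field_simps)
    have "(-d/c, h) \<in> Binf" using h1 by (simp add: Binf_def)
    moreover have "mob \<gamma> (-d/c, h) \<in> Binf"
    proof -
      have "(cmod c)\<^sup>2 * h = (1 + (cmod c)\<^sup>2)/2" using c2 by (simp add: h_def field_simps)
      hence "(cmod c)\<^sup>2 * h < 1" using c2 by simp
      hence "1 / ((cmod c)\<^sup>2 * h) > 1" using c2 h1 by (simp add: field_simps)
      thus ?thesis using ht[of h] h1 by (simp add: Binf_def)
    qed
    ultimately show False using dis by blast
  qed
qed

lemma mob_fst_A: "mob (mat2 a b c d) (0, 1) = ((b * cnj d + a * cnj c) / complex_of_real ((cmod d)\<^sup>2 + (cmod c)\<^sup>2), 1 / ((cmod d)\<^sup>2 + (cmod c)\<^sup>2))"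
  by (simp add: mob_def mat2_nth Let_def)

lemma mat2_neg: "- mat2 a b c d = mat2 (-a) (-b) (-c) (-d)"
  by (simp add: vec_eq_iff forall_2 mat2_def)

lemma sep:
  fixes \<Gamma> :: "cmat set" and t\<alpha> t\<beta> c b00 :: complex and g \<gamma> :: cmat and lk :: real
  assumes grp: "psl2_group \<Gamma>"
    and tf: "torsion_free \<Gamma>"
    and stab: "\<forall>\<gamma>\<in>\<Gamma>. \<gamma>$2$1 = 0 \<longleftrightarrow>
                 (\<exists>p q :: int. \<gamma> = transl (of_int p * t\<alpha> + of_int q * t\<beta>)
                             \<or> \<gamma> = - transl (of_int p * t\<alpha> + of_int q * t\<beta>))"
    and horoball: "\<forall>\<gamma>\<in>\<Gamma>. mob \<gamma> ` Binf = Binf \<or> mob \<gamma> ` Binf \<inter> Binf = {}"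
    and g_def: "g = mat2 (c * b00) (- 1 / c) c 0"
    and g_in: "g \<in> \<Gamma>"
    and c1: "cmod c = 1"
    and lat: "\<forall>p q :: int. (p, q) \<noteq> (0, 0) \<longrightarrow> cmod (of_int p * t\<alpha> + of_int q * t\<beta>) \<ge> lk"
    and gin: "\<gamma> \<in> \<Gamma>"
  shows "\<gamma> = mat 1 \<or> \<gamma> = - mat 1 \<or>
     (snd (mob \<gamma> (0,1)) \<le> 1 \<and> (snd (mob \<gamma> (0,1)) \<le> 1/2 \<or> cmod (fst (mob \<gamma> (0,1))) \<ge> min lk (1/2)))"
proof -
  have c0: "c \<noteq> 0" using c1 by auto
  have ge1: "\<And>\<eta>. \<eta> \<in> \<Gamma> \<Longrightarrow> \<eta>$2$1 = 0 \<or> cmod (\<eta>$2$1) \<ge> 1"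
    using c_ge1 horoball by blast
  have mul: "\<And>x y. x \<in> \<Gamma> \<Longrightarrow> y \<in> \<Gamma> \<Longrightarrow> x ** y \<in> \<Gamma>" using grp by (simp add: psl2_group_def)
  define gi where "gi = mat2 0 (1/c) (-c) (c*b00)"
  have "matrix_inv g = gi"
    by (rule matrix_inv_eq) (simp_all add: g_def gi_def mat2_mult mat2_one c0 field_simps)
  hence gi_in: "gi \<in> \<Gamma>" using grp g_in by (metis psl2_group_def)
  obtain \<alpha> \<beta> \<kappa> \<delta> where gm: "\<gamma> = mat2 \<alpha> \<beta> \<kappa> \<delta>" using mat2_eta by blast
  have "det \<gamma> = 1" using grp gin by (simp add: psl2_group_def)
  hence det1: "\<alpha> * \<delta> - \<beta> * \<kappa> = 1" by (simp add: gm det_mat2)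
  have k: "\<kappa> = 0 \<or> cmod \<kappa> \<ge> 1" using ge1[OF gin] by (simp add: gm mat2_nth)
  have "(g ** \<gamma>) $2$1 = 0 \<or> cmod ((g ** \<gamma>)$2$1) \<ge> 1" using ge1 mul g_in gin by blast
  hence a: "\<alpha> = 0 \<or> cmod \<alpha> \<ge> 1" by (simp add: g_def gm mat2_mult mat2_nth norm_mult c1 c0)
  have "(\<gamma> ** gi) $2$1 = 0 \<or> cmod ((\<gamma> ** gi)$2$1) \<ge> 1" using ge1 mul gi_in gin by blast
  hence d: "\<delta> = 0 \<or> cmod \<delta> \<ge> 1" by (simp add: gi_def gm mat2_mult mat2_nth norm_mult c1 c0)
  define P where "P = mob \<gamma> (0,1)"
  define N where "N = (cmod \<delta>)\<^sup>2 + (cmod \<kappa>)\<^sup>2"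
  have P: "P = ((\<beta> * cnj \<delta> + \<alpha> * cnj \<kappa>) / complex_of_real N, 1 / N)"
    by (simp add: P_def gm mob_fst_A N_def)
  show ?thesis
  proof (cases "\<kappa> = 0")
    case True
    then obtain p q :: int where pq: "\<gamma> = transl (of_int p * t\<alpha> + of_int q * t\<beta>)
                             \<or> \<gamma> = - transl (of_int p * t\<alpha> + of_int q * t\<beta>)"
      using stab gin True unfolding gm by (metis mat2_nth(3))
    define t where "t = of_int p * t\<alpha> + of_int q * t\<beta>"
    have Pt: "mob \<gamma> (0,1) = (t, 1)"
      using pq unfolding t_def[symmetric]
      by (auto simp: transl_def mat2_neg mob_fst_A)
    show ?thesis
    proof (cases "(p,q) = (0,0)")
      case True
      hence "t = 0" by (simp add: t_def)
      hence "transl t = mat 1" by (simp add: transl_def mat2_one)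
      thus ?thesis using pq t_def by auto
    next
      case False
      hence "cmod t \<ge> lk" using lat t_def by blast
      thus ?thesis using Pt by (simp add: min_le_iff_disj)
    qed
  next
    case kn: False
    hence k1: "cmod \<kappa> \<ge> 1" using k by simp
    hence N1: "N \<ge> 1" unfolding N_def
      by (smt (verit) one_le_power zero_le_power2)
    have sP: "snd P \<le> 1" using N1 P by simp
    show ?thesis
    proof (cases "\<delta> = 0")
      case False
      hence "cmod \<delta> \<ge> 1" using d by simp
      hence "N \<ge> 2" using k1 unfolding N_def
        by (smt (verit) one_le_power)
      hence "snd P \<le> 1/2" using P by (simp add: field_simps)
      thus ?thesis using sP P_def by simp
    next
      case d0: True
      have b: "\<beta> = -1/\<kappa>" using det1 d0 kn by (simp add: field_simps) (metis add.inverse_inverse)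
      show ?thesis
      proof (cases "N \<ge> 2")
        case True
        hence "snd P \<le> 1/2" using P by (simp add: field_simps)
        thus ?thesis using sP P_def by simp
      next
        case N2: False
        show ?thesis
        proof (cases "\<alpha> = 0")
          case True
          have "mpow \<gamma> 2 = - mat 1"
            by (simp add: numeral_2_eq_2 gm True d0 b mat2_one mat2_neg mat2_mult kn)
          hence "\<gamma> \<in> {mat 1, - mat 1}" using tf gin unfolding torsion_free_def
            by (metis insertCI one_le_numeral)
          hence False using kn by (auto simp: gm mat2_one mat2_neg mat2_eq)
          thus ?thesis ..
        next
          case False
          hence a1: "cmod \<alpha> \<ge> 1" using a by simp
          have Nk: "N = (cmod \<kappa>)\<^sup>2" using d0 by (simp add: N_def)
          have "fst P = \<alpha> * cnj \<kappa> / complex_of_real ((cmod \<kappa>)\<^sup>2)" using P d0 Nk by simp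
          also have "\<dots> = \<alpha> / \<kappa>" by (metis complex_div_cnj of_real_power)
          finally have fP: "cmod (fst P) = cmod \<alpha> / cmod \<kappa>" by (simp add: norm_divide)
          have "cmod \<kappa> < 2"
          proof -
            have "(cmod \<kappa>)\<^sup>2 < 2" using N2 Nk by simp
            hence "(cmod \<kappa>)\<^sup>2 < 2\<^sup>2" by simp
            thus ?thesis using power_less_imp_less_base by fastforce
          qed
          hence "cmod \<kappa> \<le> 2 * cmod \<alpha>" using a1 by simp
          hence "cmod \<alpha> / cmod \<kappa> \<ge> 1/2" using k1 kn by (simp add: le_divide_eq)
          hence "cmod (fst P) \<ge> min lk (1/2)" using fP by (simp add: min_le_iff_disj)
          thus ?thesis using sP P_def by simp
        qed
      qed
    qed
  qed
qed

definition Qd :: "hpt \<Rightarrow> hpt \<Rightarrow> real" where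
  "Qd x y = ((cmod (fst x - fst y))\<^sup>2 + (snd x - snd y)\<^sup>2) / (2 * snd x * snd y)"

lemma hdist_Qd: "hdist x y = arcosh (1 + Qd x y)"
  by (simp add: hdist_def Qd_def)

lemma key_poly:
  fixes nu nv w C hx hy Dx Dy :: real
  assumes Dx: "Dx = nu + C * hx\<^sup>2" and Dy: "Dy = nv + C * hy\<^sup>2" and p: "Dx > 0" "Dy > 0"
  shows "(Dx\<^sup>2 * nv + Dy\<^sup>2 * nu - 2 * Dx * Dy * w) / (Dx*Dy)\<^sup>2 + C * (hx * Dy - hy * Dx)\<^sup>2 / (Dx*Dy)\<^sup>2
     = (nu + nv - 2 * w + C * (hx - hy)\<^sup>2) / (Dx * Dy)"
proof -
  have "Dx\<^sup>2 * nv + Dy\<^sup>2 * nu - 2 * Dx * Dy * w + C * (hx * Dy - hy * Dx)\<^sup>2 = (Dx * Dy) * (nu + nv - 2 * w + C * (hx - hy)\<^sup>2)"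
    unfolding Dx Dy by (simp add: power2_eq_square algebra_simps)
  hence "(Dx\<^sup>2 * nv + Dy\<^sup>2 * nu - 2 * Dx * Dy * w) / (Dx*Dy)\<^sup>2 + C * (hx * Dy - hy * Dx)\<^sup>2 / (Dx*Dy)\<^sup>2
     = (Dx * Dy) * (nu + nv - 2 * w + C * (hx - hy)\<^sup>2) / (Dx*Dy)\<^sup>2"
    by (simp add: add_divide_distrib[symmetric])
  also have "\<dots> = (nu + nv - 2 * w + C * (hx - hy)\<^sup>2) / (Dx * Dy)" using p by (simp add: power2_eq_square)
  finally show ?thesis .
qed

lemma key_real:
  fixes U V :: complex and C hx hy Dx Dy :: real
  assumes Dx: "Dx = (cmod U)\<^sup>2 + C * hx\<^sup>2" and Dy: "Dy = (cmod V)\<^sup>2 + C * hy\<^sup>2"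
    and p: "Dx > 0" "Dy > 0"
  shows "(cmod (V / of_real Dy - U / of_real Dx))\<^sup>2 + C * (hx/Dx - hy/Dy)\<^sup>2
       = ((cmod (U - V))\<^sup>2 + C * (hx - hy)\<^sup>2) / (Dx * Dy)"
proof -
  have e1: "V / of_real Dy - U / of_real Dx = of_real (1/(Dx*Dy)) * (of_real Dx * V - of_real Dy * U)"
    using p by (simp add: field_simps)
  have "(cmod (V / of_real Dy - U / of_real Dx))\<^sup>2 = (cmod (of_real Dx * V - of_real Dy * U))\<^sup>2 / (Dx*Dy)\<^sup>2"
    unfolding e1 using p by (simp only: norm_mult norm_of_real power_mult_distrib) (simp add: power_divide abs_mult power_mult_distrib)
  moreover have "(cmod (of_real Dx * V - of_real Dy * U))\<^sup>2 = Dx\<^sup>2 * (cmod V)\<^sup>2 + Dy\<^sup>2 * (cmod U)\<^sup>2 - 2 * Dx * Dy * (Re U * Re V + Im U * Im V)"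
    by (simp add: cmod_power2) (simp add: power2_eq_square algebra_simps)
  moreover have "(cmod (U - V))\<^sup>2 = (cmod U)\<^sup>2 + (cmod V)\<^sup>2 - 2 * (Re U * Re V + Im U * Im V)"
    by (simp add: cmod_power2) (simp add: power2_eq_square algebra_simps)
  moreover have "C * (hx/Dx - hy/Dy)\<^sup>2 = C * (hx * Dy - hy * Dx)\<^sup>2 / (Dx*Dy)\<^sup>2"
    using p by (simp add: field_simps)
  ultimately show ?thesis using key_poly[OF Dx Dy p, of "Re U * Re V + Im U * Im V"] by simp
qed

lemma mob_c_ne0:
  fixes a b c d z :: complex and h :: real
  assumes det: "a*d - b*c = 1" and c: "c \<noteq> 0" and h: "h > 0"
  defines "U \<equiv> c * z + d"
  defines "Dx \<equiv> (cmod U)\<^sup>2 + (cmod c)\<^sup>2 * h\<^sup>2"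
  shows "Dx > 0" "snd (mob (mat2 a b c d) (z,h)) = h / Dx"
    "fst (mob (mat2 a b c d) (z,h)) = a/c - cnj U / (c * of_real Dx)"
proof -
  show Dp: "Dx > 0" unfolding Dx_def using c h
    by (simp add: add_nonneg_pos)
  show "snd (mob (mat2 a b c d) (z,h)) = h / Dx"
    by (simp add: mob_def mat2_nth Let_def U_def Dx_def)
  have f: "fst (mob (mat2 a b c d) (z,h)) = ((a * z + b) * cnj U + a * cnj c * complex_of_real (h\<^sup>2)) / of_real Dx"
    by (simp add: mob_def mat2_nth Let_def U_def Dx_def)
  have D: "of_real Dx = U * cnj U + c * cnj c * of_real (h\<^sup>2)"
    by (simp add: Dx_def complex_norm_square[symmetric])
  have "c * ((a * z + b) * cnj U + a * cnj c * complex_of_real (h\<^sup>2)) = a * of_real Dx - cnj U"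
  proof -
    have e: "c * (a * z + b) = a * U - 1" using det by (simp add: U_def algebra_simps)
    have "c * ((a * z + b) * cnj U + a * cnj c * complex_of_real (h\<^sup>2)) = (c * (a * z + b)) * cnj U + a * (c * cnj c * complex_of_real (h\<^sup>2))"
      by (simp add: algebra_simps)
    also have "\<dots> = (a * U - 1) * cnj U + a * (c * cnj c * complex_of_real (h\<^sup>2))" by (simp only: e)
    also have "\<dots> = a * (U * cnj U + c * cnj c * complex_of_real (h\<^sup>2)) - cnj U" by (simp add: algebra_simps)
    finally show ?thesis unfolding D .
  qed
  hence "(a * z + b) * cnj U + a * cnj c * complex_of_real (h\<^sup>2) = (a * of_real Dx - cnj U) / c"
    using c by (simp add: eq_divide_eq mult.commute)
  thus "fst (mob (mat2 a b c d) (z,h)) = a/c - cnj U / (c * of_real Dx)"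
  proof -
    assume e: "(a * z + b) * cnj U + a * cnj c * complex_of_real (h\<^sup>2) = (a * of_real Dx - cnj U) / c"
    have "(a * of_real Dx - cnj U) / c / of_real Dx = (a * of_real Dx) / (c * of_real Dx) - cnj U / (c * of_real Dx)"
      by (simp add: diff_divide_distrib)
    also have "(a * of_real Dx) / (c * of_real Dx) = a / c" using Dp by simp
    finally show ?thesis unfolding f e .
  qed
qed
lemma iso:
  fixes \<gamma> :: cmat and x y :: hpt
  assumes det: "det \<gamma> = 1" and hx: "snd x > 0" and hy: "snd y > 0"
  shows "Qd (mob \<gamma> x) (mob \<gamma> y) = Qd x y"
proof -
  obtain a b c d where gm: "\<gamma> = mat2 a b c d" using mat2_eta by blast
  have det1: "a*d - b*c = 1" using det by (simp add: gm det_mat2)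
  obtain zx h where x: "x = (zx, h)" by (cases x)
  obtain zy k where y: "y = (zy, k)" by (cases y)
  have h: "h > 0" and k: "k > 0" using hx hy x y by auto
  define E where "E = (cmod (zx - zy))\<^sup>2 + (h - k)\<^sup>2"
  have Qxy: "Qd x y = E / (2 * h * k)" by (simp add: Qd_def x y E_def)
  show ?thesis
  proof (cases "c = 0")
    case False
    define U where "U = c * zx + d"
    define V where "V = c * zy + d"
    define Dx where "Dx = (cmod U)\<^sup>2 + (cmod c)\<^sup>2 * h\<^sup>2"
    define Dy where "Dy = (cmod V)\<^sup>2 + (cmod c)\<^sup>2 * k\<^sup>2"
    note mx = mob_c_ne0[OF det1 False h, of zx, folded U_def, folded Dx_def]
    note my = mob_c_ne0[OF det1 False k, of zy, folded V_def, folded Dy_def]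
    have fd: "fst (mob \<gamma> x) - fst (mob \<gamma> y) = (cnj V / of_real Dy - cnj U / of_real Dx) / c"
      using mx(3) my(3) unfolding gm x y by (simp add: diff_divide_distrib divide_divide_eq_left mult.commute)
    have cn: "cmod (cnj V / of_real Dy - cnj U / of_real Dx) = cmod (V / of_real Dy - U / of_real Dx)"
    proof -
      have "cnj V / of_real Dy - cnj U / of_real Dx = cnj (V / of_real Dy - U / of_real Dx)" by simp
      thus ?thesis by (metis complex_mod_cnj)
    qed
    have UV: "cmod (U - V) = cmod c * cmod (zx - zy)"
      by (simp add: U_def V_def norm_mult[symmetric] algebra_simps)
    have kr: "(cmod (V / of_real Dy - U / of_real Dx))\<^sup>2 + (cmod c)\<^sup>2 * (h/Dx - k/Dy)\<^sup>2
       = ((cmod (U - V))\<^sup>2 + (cmod c)\<^sup>2 * (h - k)\<^sup>2) / (Dx * Dy)"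
      by (rule key_real) (use mx(1) my(1) in \<open>simp_all add: Dx_def Dy_def\<close>)
    have cp: "(cmod c)\<^sup>2 > 0" using False by simp
    have E': "(cmod (fst (mob \<gamma> x) - fst (mob \<gamma> y)))\<^sup>2 + (snd (mob \<gamma> x) - snd (mob \<gamma> y))\<^sup>2 = E / (Dx * Dy)"
    proof -
      have "(cmod c)\<^sup>2 * ((cmod (fst (mob \<gamma> x) - fst (mob \<gamma> y)))\<^sup>2 + (snd (mob \<gamma> x) - snd (mob \<gamma> y))\<^sup>2)
          = (cmod c)\<^sup>2 * (E / (Dx * Dy))"
      proof -
        have n1: "(cmod (fst (mob \<gamma> x) - fst (mob \<gamma> y)))\<^sup>2 = (cmod (V / of_real Dy - U / of_real Dx))\<^sup>2 / (cmod c)\<^sup>2"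
          unfolding fd norm_divide cn by (simp add: power_divide)
        have n2: "snd (mob \<gamma> x) - snd (mob \<gamma> y) = h/Dx - k/Dy" using mx(2) my(2) by (simp add: gm x y)
        have "(cmod c)\<^sup>2 * ((cmod (fst (mob \<gamma> x) - fst (mob \<gamma> y)))\<^sup>2 + (snd (mob \<gamma> x) - snd (mob \<gamma> y))\<^sup>2)
          = (cmod (V / of_real Dy - U / of_real Dx))\<^sup>2 + (cmod c)\<^sup>2 * (h/Dx - k/Dy)\<^sup>2"
          unfolding n1 n2 using cp by (simp add: distrib_left)
        also have "\<dots> = ((cmod c)\<^sup>2 * E) / (Dx * Dy)" unfolding kr UV E_def
          by (simp add: power_mult_distrib distrib_left)
        finally show ?thesis by simp
      qed
      thus ?thesis using cp by (metis mult_cancel_left less_irrefl)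
    qed
    have sx: "snd (mob \<gamma> x) = h / Dx" and sy: "snd (mob \<gamma> y) = k / Dy" using mx(2) my(2) by (simp_all add: gm x y)
    have "Qd (mob \<gamma> x) (mob \<gamma> y) = (E / (Dx * Dy)) / (2 * (h / Dx) * (k / Dy))"
      unfolding Qd_def E' by (simp only: sx sy)
    also have "\<dots> = E / (2 * h * k)" using mx(1) my(1) h k by (simp add: field_simps)
    finally show ?thesis unfolding Qxy .
  next
    case True
    have ad1: "a * d = 1" using det1 True by simp
    hence d0: "d \<noteq> 0" by auto
    have ad: "a = 1/d" using ad1 d0 by (simp add: eq_divide_eq)
    define n where "n = (cmod d)\<^sup>2"
    have np: "n > 0" using d0 by (simp add: n_def)
    have sx: "snd (mob \<gamma> x) = h / n" and sy: "snd (mob \<gamma> y) = k / n"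
      by (simp_all add: mob_def gm x y mat2_nth True n_def)
    have "fst (mob \<gamma> x) - fst (mob \<gamma> y) = a * (zx - zy) * cnj d / of_real n"
      by (simp add: mob_def gm x y mat2_nth True n_def Let_def diff_divide_distrib[symmetric] algebra_simps)
    hence "cmod (fst (mob \<gamma> x) - fst (mob \<gamma> y)) = cmod (zx - zy) / n"
      using d0 by (simp add: ad norm_mult norm_divide n_def power2_eq_square)
    hence E': "(cmod (fst (mob \<gamma> x) - fst (mob \<gamma> y)))\<^sup>2 + (snd (mob \<gamma> x) - snd (mob \<gamma> y))\<^sup>2 = E / n\<^sup>2"
      unfolding sx sy E_def using np by (simp add: power_divide diff_divide_distrib[symmetric] add_divide_distrib)
    have "Qd (mob \<gamma> x) (mob \<gamma> y) = (E / n\<^sup>2) / (2 * (h / n) * (k / n))"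
      unfolding Qd_def E' by (simp only: sx sy)
    also have "\<dots> = E / (2 * h * k)" using np h k by (simp add: field_simps power2_eq_square)
    finally show ?thesis unfolding Qxy .
  qed
qed

lemma sqrt_sum_sq_le: "sqrt (r\<^sup>2 + s\<^sup>2) \<le> \<bar>r\<bar> + \<bar>s\<bar>"
  by (rule real_le_lsqrt) (auto simp: power2_eq_square abs_mult_self algebra_simps)

lemma lattice_bound:
  fixes t\<alpha> t\<beta> :: complex
  assumes indep: "\<forall>r s :: real. complex_of_real r * t\<alpha> + complex_of_real s * t\<beta> = 0 \<longrightarrow> r = 0 \<and> s = 0"
  shows "\<exists>K>0. \<forall>r s :: real. cmod (complex_of_real r * t\<alpha> + complex_of_real s * t\<beta>) \<ge> K * sqrt (r\<^sup>2 + s\<^sup>2)"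
proof -
  define a1 a2 b1 b2 where "a1 = Re t\<alpha>" "a2 = Im t\<alpha>" "b1 = Re t\<beta>" "b2 = Im t\<beta>"
  define \<Delta> where "\<Delta> = a1 * b2 - a2 * b1"
  have comb: "complex_of_real r * t\<alpha> + complex_of_real s * t\<beta> = Complex (r*a1 + s*b1) (r*a2 + s*b2)" for r s
    by (simp add: complex_eq_iff a1_a2_b1_b2_def)
  have D: "\<Delta> \<noteq> 0"
  proof
    assume "\<Delta> = 0"
    have "complex_of_real b2 * t\<alpha> + complex_of_real (-a2) * t\<beta> = 0"
      using \<open>\<Delta> = 0\<close> unfolding comb by (simp add: \<Delta>_def Complex_eq_0 algebra_simps)
    hence z1: "b2 = 0 \<and> a2 = 0" using indep[rule_format, of b2 "-a2"] by simp
    have "complex_of_real b1 * t\<alpha> + complex_of_real (-a1) * t\<beta> = 0"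
      using \<open>\<Delta> = 0\<close> unfolding comb by (simp add: \<Delta>_def Complex_eq_0 algebra_simps)
    hence z2: "b1 = 0 \<and> a1 = 0" using indep[rule_format, of b1 "-a1"] by simp
    have "t\<alpha> = 0" using z1 z2 by (simp add: complex_eq_iff a1_a2_b1_b2_def)
    hence "complex_of_real 1 * t\<alpha> + complex_of_real 0 * t\<beta> = 0" by simp
    thus False using indep[rule_format, of 1 0] by simp
  qed
  define M where "M = \<bar>a1\<bar> + \<bar>a2\<bar> + \<bar>b1\<bar> + \<bar>b2\<bar>"
  have Mp: "M > 0" using D unfolding M_def \<Delta>_def by (smt (verit) abs_ge_zero mult_eq_0_iff abs_eq_0)
  show ?thesis
  proof (intro exI[of _ "\<bar>\<Delta>\<bar> / M"] conjI allI)
    show "\<bar>\<Delta>\<bar> / M > 0" using D Mp by simp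
    fix r s :: real
    define v where "v = complex_of_real r * t\<alpha> + complex_of_real s * t\<beta>"
    define x y where "x = r*a1 + s*b1" "y = r*a2 + s*b2"
    have xv: "\<bar>x\<bar> \<le> cmod v" and yv: "\<bar>y\<bar> \<le> cmod v"
      using abs_Re_le_cmod[of v] abs_Im_le_cmod[of v] by (simp_all add: v_def comb x_y_def)
    have "b2 * x - b1 * y = r * \<Delta>" by (simp add: x_y_def \<Delta>_def algebra_simps)
    hence r: "r = (b2 * x - b1 * y) / \<Delta>" using D by (simp add: eq_divide_eq)
    have "a1 * y - a2 * x = s * \<Delta>" by (simp add: x_y_def \<Delta>_def algebra_simps)
    hence s: "s = (a1 * y - a2 * x) / \<Delta>" using D by (simp add: eq_divide_eq)
    have "\<bar>b2 * x - b1 * y\<bar> \<le> (\<bar>b2\<bar> + \<bar>b1\<bar>) * cmod v"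
    proof -
      have "\<bar>b2 * x - b1 * y\<bar> \<le> \<bar>b2\<bar> * \<bar>x\<bar> + \<bar>b1\<bar> * \<bar>y\<bar>" by (simp add: abs_mult abs_triangle_ineq4[THEN order_trans])
      also have "\<dots> \<le> \<bar>b2\<bar> * cmod v + \<bar>b1\<bar> * cmod v" using xv yv by (intro add_mono mult_left_mono) auto
      finally show ?thesis by (simp add: algebra_simps)
    qed
    hence rb: "\<bar>r\<bar> * \<bar>\<Delta>\<bar> \<le> (\<bar>b2\<bar> + \<bar>b1\<bar>) * cmod v" using D by (simp add: r abs_divide)
    have "\<bar>a1 * y - a2 * x\<bar> \<le> (\<bar>a1\<bar> + \<bar>a2\<bar>) * cmod v"
    proof -
      have "\<bar>a1 * y - a2 * x\<bar> \<le> \<bar>a1\<bar> * \<bar>y\<bar> + \<bar>a2\<bar> * \<bar>x\<bar>" by (simp add: abs_mult abs_triangle_ineq4[THEN order_trans])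
      also have "\<dots> \<le> \<bar>a1\<bar> * cmod v + \<bar>a2\<bar> * cmod v" using xv yv by (intro add_mono mult_left_mono) auto
      finally show ?thesis by (simp add: algebra_simps)
    qed
    hence sb: "\<bar>s\<bar> * \<bar>\<Delta>\<bar> \<le> (\<bar>a1\<bar> + \<bar>a2\<bar>) * cmod v" using D by (simp add: s abs_divide)
    have "sqrt (r\<^sup>2 + s\<^sup>2) * \<bar>\<Delta>\<bar> \<le> (\<bar>r\<bar> + \<bar>s\<bar>) * \<bar>\<Delta>\<bar>"
      using sqrt_sum_sq_le by (intro mult_right_mono) auto
    also have "\<dots> \<le> M * cmod v" using rb sb unfolding M_def by (simp add: algebra_simps)
    finally have "sqrt (r\<^sup>2 + s\<^sup>2) * \<bar>\<Delta>\<bar> \<le> M * cmod v" .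
    hence "(sqrt (r\<^sup>2 + s\<^sup>2) * \<bar>\<Delta>\<bar>) / M \<le> cmod v" using Mp by (simp add: pos_divide_le_eq mult.commute)
    thus "\<bar>\<Delta>\<bar> / M * sqrt (r\<^sup>2 + s\<^sup>2) \<le> cmod v" by (simp add: v_def mult.commute)
  qed
qed

lemma roots:
  fixes b k :: complex
  assumes k1: "cmod k = 1" and b3: "cmod b \<ge> 3"
  shows "\<exists>zm zp. zm + zp = b \<and> zm * zp = k \<and> cmod zm < 1 \<and> cmod zp > 1 \<and> cmod zp \<ge> cmod b - 1
           \<and> cmod zm * cmod zp = 1"
proof -
  define w where "w = csqrt (b\<^sup>2 - 4 * k)"
  have w2: "w\<^sup>2 = b\<^sup>2 - 4*k" by (simp add: w_def)
  define r1 r2 where "r1 = (b + w)/2" "r2 = (b - w)/2"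
  have s: "r1 + r2 = b" by (simp add: r1_r2_def field_simps)
  have p: "r1 * r2 = k"
  proof -
    have "r1 * r2 = (b\<^sup>2 - w\<^sup>2)/4" by (simp add: r1_r2_def power2_eq_square field_simps)
    thus ?thesis using w2 by simp
  qed
  have gen: "\<exists>zm zp. zm + zp = b \<and> zm * zp = k \<and> cmod zm < 1 \<and> cmod zp > 1 \<and> cmod zp \<ge> cmod b - 1
           \<and> cmod zm * cmod zp = 1"
    if s': "x + y = b" and p': "x * y = k" and le: "cmod x \<le> cmod y" for x y
  proof -
    have pm: "cmod x * cmod y = 1" using p' k1 by (metis norm_mult)
    have x1: "cmod x \<le> 1"
    proof (rule ccontr)
      assume "\<not> cmod x \<le> 1"
      hence "cmod x * cmod y > 1 * 1" using le by (intro mult_strict_mono) auto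
      thus False using pm by simp
    qed
    have "cmod b \<le> cmod x + cmod y" using s' norm_triangle_ineq by blast
    hence yb: "cmod y \<ge> cmod b - 1" using x1 by simp
    hence y1: "cmod y > 1" using b3 by simp
    have "cmod x < 1"
    proof (rule ccontr)
      assume "\<not> cmod x < 1"
      hence "cmod x = 1" using x1 by simp
      thus False using pm y1 by simp
    qed
    thus ?thesis using s' p' yb y1 pm by blast
  qed
  show ?thesis
  proof (cases "cmod r1 \<le> cmod r2")
    case True thus ?thesis using gen[OF s p] by blast
  next
    case False thus ?thesis using gen[of r2 r1] s p by (simp add: add.commute mult.commute)
  qed
qed

lemma bfix_G:
  fixes b c z :: complex
  assumes c0: "c \<noteq> 0" and s: "zm + zp = b" and p: "zm * zp = 1 / c\<^sup>2"
  shows "bfix (mat2 (c*b) (-1/c) c 0) z \<longleftrightarrow> z = zm \<or> z = zp"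
proof -
  have "bfix (mat2 (c*b) (-1/c) c 0) z \<longleftrightarrow> c * z\<^sup>2 + (0 - c*b) * z - (-1/c) = 0"
    by (simp add: bfix_def mat2_nth)
  also have "c * z\<^sup>2 + (0 - c*b) * z - (-1/c) = c * ((z - zm) * (z - zp))"
    using c0 unfolding s[symmetric] by (simp add: p power2_eq_square algebra_simps)
  finally show ?thesis using c0 by simp
qed

lemma seg_param: "(1 - u) *\<^sub>R (a::complex) + u *\<^sub>R b = a + of_real u * (b - a)"
  by (simp add: scaleR_conv_of_real algebra_simps)

lemma hline_meet:
  fixes zm zp :: complex
  assumes R1: "cmod (zp - zm) / 2 > 1"
  defines "R \<equiv> cmod (zp - zm) / 2"
  defines "s \<equiv> sqrt (R\<^sup>2 - 1)"
  defines "tC \<equiv> 1/2 - s / (2*R)" and "tD \<equiv> 1/2 + s / (2*R)"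
  defines "zC \<equiv> zm + of_real tC * (zp - zm)" and "zD \<equiv> zm + of_real tD * (zp - zm)"
  shows "hline zm zp \<inter> Hinf = {(zC,1),(zD,1)}" "zC \<noteq> zD" "cmod (zC - zm) < cmod (zD - zm)"
    "zC + zD = zm + zp" "cmod zC \<le> cmod zm + 1/R"
proof -
  have R: "R > 1" using R1 by (simp add: R_def)
  have ne: "zp - zm \<noteq> 0" using R by (auto simp: R_def)
  have s2: "s\<^sup>2 = R\<^sup>2 - 1" unfolding s_def using R by (simp add: power_le_one_iff)
  have spos: "s > 0" unfolding s_def using R by (simp add: one_less_power)
  have sR: "s < R" proof -
    have "s\<^sup>2 < R\<^sup>2" using s2 by simp
    thus ?thesis using R by (smt (verit) power_mono)
  qed
  have q: "s / (2*R) < 1/2" using sR R by (simp add: field_simps)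
  have qp: "s / (2*R) > 0" using spos R by simp
  have tC: "0 < tC" "tC < 1" and tD: "0 < tD" "tD < 1" and tCD: "tC < tD"
    using q qp by (simp_all add: tC_def tD_def)
  have nz: "cmod (zp - zm) = 2 * R" by (simp add: R_def)
  have dist_t: "cmod (of_real t * (zp - zm)) = \<bar>t\<bar> * (2*R)" for t
    by (simp add: norm_mult nz)
  have mid: "zm + of_real u * (zp - zm) - (zm + zp)/2 = of_real (u - 1/2) * (zp - zm)" for u
    by (simp add: field_simps)
  have circ: "(cmod (zm + of_real u * (zp - zm) - (zm + zp)/2))\<^sup>2 + 1 = (cmod (zm - zp))\<^sup>2 / 4
      \<longleftrightarrow> u = tC \<or> u = tD" for u
  proof -
    have l: "(cmod (zm + of_real u * (zp - zm) - (zm + zp)/2))\<^sup>2 = (u - 1/2)\<^sup>2 * (4 * R\<^sup>2)"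
      unfolding mid dist_t by (simp add: power_mult_distrib power2_abs)
    have r: "(cmod (zm - zp))\<^sup>2 / 4 = R\<^sup>2" using nz by (simp add: norm_minus_commute power_mult_distrib)
    have "(u - 1/2)\<^sup>2 * (4 * R\<^sup>2) + 1 = R\<^sup>2 \<longleftrightarrow> (u - 1/2)\<^sup>2 = (s/(2*R))\<^sup>2"
      using R s2 by (simp add: power_divide field_simps) (smt (verit))
    also have "\<dots> \<longleftrightarrow> u - 1/2 = s/(2*R) \<or> u - 1/2 = - (s/(2*R))"
      by (simp add: power2_eq_iff)
    also have "\<dots> \<longleftrightarrow> u = tC \<or> u = tD" by (auto simp: tC_def tD_def)
    finally show ?thesis unfolding l r .
  qed
  show "hline zm zp \<inter> Hinf = {(zC,1),(zD,1)}"
  proof (intro equalityI subsetI)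
    fix x assume x: "x \<in> hline zm zp \<inter> Hinf"
    then obtain u where u: "0 < u" "u < 1" "fst x = zm + of_real u * (zp - zm)"
      by (auto simp: hline_def in_segment seg_param)
    have h1: "snd x = 1" using x by (simp add: Hinf_def)
    have "(cmod (zm + of_real u * (zp - zm) - (zm + zp)/2))\<^sup>2 + 1 = (cmod (zm - zp))\<^sup>2 / 4"
      using x u(3) h1 by (simp add: hline_def)
    hence "u = tC \<or> u = tD" using circ by blast
    thus "x \<in> {(zC,1),(zD,1)}" using u(3) h1 by (cases x) (auto simp: zC_def zD_def)
  next
    fix x :: hpt assume "x \<in> {(zC,1),(zD,1)}"
    then obtain t where t: "t = tC \<or> t = tD" "x = (zm + of_real t * (zp - zm), 1)"
      by (auto simp: zC_def zD_def)
    have t01: "0 < t" "t < 1" using t tC tD by auto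
    have seg: "zm + of_real t * (zp - zm) \<in> open_segment zm zp"
      unfolding in_segment using ne t01 by (auto simp: seg_param intro!: exI[of _ t])
    have "(cmod (zm + of_real t * (zp - zm) - (zm + zp)/2))\<^sup>2 + 1 = (cmod (zm - zp))\<^sup>2 / 4"
      using circ t(1) by blast
    thus "x \<in> hline zm zp \<inter> Hinf" using seg t(2) by (simp add: hline_def Hinf_def)
  qed
  show "zC \<noteq> zD"
  proof
    assume "zC = zD"
    hence "of_real tC * (zp - zm) = of_real tD * (zp - zm)" by (simp add: zC_def zD_def)
    hence "tC = tD" using ne by simp
    thus False using tCD by simp
  qed
  show "cmod (zC - zm) < cmod (zD - zm)"
    using tC tD tCD R by (simp add: zC_def zD_def dist_t)
  show "zC + zD = zm + zp"
  proof -
    have "tC + tD = 1" by (simp add: tC_def tD_def)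
    hence "of_real tC + of_real tD = (1::complex)" by (metis of_real_1 of_real_add)
    thus ?thesis unfolding zC_def zD_def by (simp add: algebra_simps) (metis add.commute add_diff_cancel_left' distrib_left mult.right_neutral)
  qed
  show "cmod zC \<le> cmod zm + 1/R"
  proof -
    have "cmod zC \<le> cmod zm + cmod (of_real tC * (zp - zm))" unfolding zC_def by (rule norm_triangle_ineq)
    also have "cmod (of_real tC * (zp - zm)) = tC * (2*R)" using tC by (simp add: dist_t)
    also have "tC * (2*R) = R - s" using R by (simp add: tC_def field_simps)
    also have "R - s = 1 / (R + s)"
    proof -
      have "(R - s) * (R + s) = 1" using s2 by (simp add: power2_eq_square algebra_simps)
      thus ?thesis using R spos by (simp add: field_simps)
    qed
    also have "1 / (R + s) \<le> 1 / R" using R spos by (simp add: frac_le)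
    finally show ?thesis by simp
  qed
qed

lemma mob_inv_pt:
  fixes c b z w :: complex
  assumes c1: "cmod c = 1" and bz: "b - z = w"
  shows "snd (mob (mat2 0 (1/c) (-c) (c*b)) (z, 1)) = 1 / ((cmod w)\<^sup>2 + 1)"
    "cmod (fst (mob (mat2 0 (1/c) (-c) (c*b)) (z, 1))) = cmod w / ((cmod w)\<^sup>2 + 1)"
proof -
  have e: "- c * z + c * b = c * w" "c * b - c * z = c * w" using bz by (simp_all add: algebra_simps)
  have e3: "cnj c * cnj b - cnj c * cnj z = cnj c * cnj w" using arg_cong[OF e(2), of cnj] by simp
  show "snd (mob (mat2 0 (1/c) (-c) (c*b)) (z, 1)) = 1 / ((cmod w)\<^sup>2 + 1)"
    by (simp add: mob_snd mat2_nth e norm_mult c1)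
  have "fst (mob (mat2 0 (1/c) (-c) (c*b)) (z, 1)) = (1/c) * cnj (c * w) / of_real ((cmod w)\<^sup>2 + 1)"
    by (simp add: mob_def mat2_nth Let_def e e3 norm_mult c1)
  moreover have n: "cmod (complex_of_real ((cmod w)\<^sup>2 + 1)) = (cmod w)\<^sup>2 + 1"
    by (simp only: norm_of_real) (simp add: add_nonneg_pos)
  ultimately show "cmod (fst (mob (mat2 0 (1/c) (-c) (c*b)) (z, 1))) = cmod w / ((cmod w)\<^sup>2 + 1)"
    by (simp only: norm_divide norm_mult n complex_mod_cnj c1) simp
qed

lemma constr:
  fixes b c :: complex and \<epsilon> :: real
  assumes c1: "cmod c = 1" and e: "0 < \<epsilon>" "\<epsilon> \<le> 1" and bb: "cmod b \<ge> 4 + 4/\<epsilon>"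
  shows "\<exists>zm zp. zm \<noteq> zp \<and> {z. bfix (mat2 (c*b) (-1/c) c 0) z} = {zm, zp} \<and>
      rep_fix (mat2 (c*b) (-1/c) c 0) zm \<and> att_fix (mat2 (c*b) (-1/c) c 0) zp \<and>
      (\<exists>C D. hline zm zp \<inter> Hinf = {C, D} \<and> C \<noteq> D \<and> cmod (fst C - zm) < cmod (fst D - zm) \<and>
         snd C = 1 \<and> cmod (fst C) \<le> \<epsilon> \<and>
         snd (mob (matrix_inv (mat2 (c*b) (-1/c) c 0)) D) > 0 \<and>
         cmod (fst (mob (matrix_inv (mat2 (c*b) (-1/c) c 0)) D)) \<le> \<epsilon> \<and>
         \<bar>snd (mob (matrix_inv (mat2 (c*b) (-1/c) c 0)) D) - 1\<bar> \<le> \<epsilon>)"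
proof -
  define G where "G = mat2 (c*b) (-1/c) c 0"
  have c0: "c \<noteq> 0" using c1 by auto
  have k1: "cmod (1/c\<^sup>2) = 1" using c1 by (simp add: norm_divide norm_power)
  have ie: "4/\<epsilon> \<ge> 4" using e by (simp add: field_simps)
  have b3: "cmod b \<ge> 3" using bb ie by simp
  obtain zm zp where r: "zm + zp = b" "zm * zp = 1/c\<^sup>2" "cmod zm < 1" "cmod zp > 1"
      "cmod zp \<ge> cmod b - 1" "cmod zm * cmod zp = 1"
    using roots[OF k1 b3] by blast
  have ne: "zm \<noteq> zp" using r(3,4) by auto
  have fx: "{z. bfix G z} = {zm, zp}" using bfix_G[OF c0 r(1,2)] by (auto simp: G_def)
  have rep: "rep_fix G zm" using fx r(3) by (auto simp: rep_fix_def G_def mat2_nth norm_mult c1)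
  have att: "att_fix G zp" using fx r(4) by (auto simp: att_fix_def G_def mat2_nth norm_mult c1)
  define R where "R = cmod (zp - zm) / 2"
  have "cmod zp - cmod zm \<le> cmod (zp - zm)" by (rule norm_triangle_ineq2)
  hence "R \<ge> (cmod b - 2) / 2" using r(3,5) by (simp add: R_def)
  hence Rb: "R \<ge> 1 + 2/\<epsilon>" using bb by (simp add: field_simps)
  have R1: "cmod (zp - zm) / 2 > 1" using Rb e R_def by (smt (verit) divide_pos_pos)
  have iR: "1/R \<le> \<epsilon>/2"
  proof -
    have "R \<ge> 2/\<epsilon>" using Rb by simp
    moreover have "2/\<epsilon> > 0" using e by simp
    ultimately have Rp: "R > 0" by linarith
    have "1/R \<le> 1/(2/\<epsilon>)" using \<open>R \<ge> 2/\<epsilon>\<close> \<open>2/\<epsilon> > 0\<close> Rp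
      by (intro divide_left_mono) (simp_all add: mult_pos_pos)
    thus ?thesis by simp
  qed
  have zmb: "cmod zm \<le> \<epsilon>/4"
  proof -
    have zp4: "cmod zp \<ge> 4/\<epsilon>" using r(5) bb by simp
    have "cmod zm = 1 / cmod zp" using r(6) r(4) by (auto simp add: eq_divide_eq)
    also have "\<dots> \<le> 1 / (4/\<epsilon>)" using zp4 e r(4) by (intro divide_left_mono) (auto intro!: divide_pos_pos mult_pos_pos)
    finally show ?thesis by simp
  qed
  define s where "s = sqrt (R\<^sup>2 - 1)"
  define tC where "tC = 1/2 - s / (2*R)"
  define tD where "tD = 1/2 + s / (2*R)"
  define zC where "zC = zm + of_real tC * (zp - zm)"
  define zD where "zD = zm + of_real tD * (zp - zm)"
  note hm = hline_meet[OF R1, folded R_def, folded s_def, folded tC_def tD_def, folded zC_def zD_def]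
  have "cmod zC \<le> \<epsilon>/4 + \<epsilon>/2" using hm(5) iR zmb by linarith
  hence zCb: "cmod zC \<le> \<epsilon>" using e by linarith
  have Ginv: "matrix_inv G = mat2 0 (1/c) (-c) (c*b)"
    by (rule matrix_inv_eq) (simp_all add: G_def mat2_mult mat2_one c0 field_simps)
  have bz: "b - zD = zC" using hm(4) r(1) by (simp add: algebra_simps)
  note mi = mob_inv_pt[OF c1 bz]
  have sp: "snd (mob (matrix_inv G) (zD,1)) > 0" unfolding Ginv mi(1) by (simp add: add_nonneg_pos)
  have fb: "cmod (fst (mob (matrix_inv G) (zD,1))) \<le> \<epsilon>"
  proof -
    have "cmod zC / ((cmod zC)\<^sup>2 + 1) \<le> cmod zC / 1"
      by (intro divide_left_mono) (auto intro: add_nonneg_pos)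
    thus ?thesis unfolding Ginv mi(2) using zCb by simp
  qed
  have sb: "\<bar>snd (mob (matrix_inv G) (zD,1)) - 1\<bar> \<le> \<epsilon>"
  proof -
    have pos: "(cmod zC)\<^sup>2 + 1 > 0" by (simp add: add_nonneg_pos)
    have "1 / ((cmod zC)\<^sup>2 + 1) - 1 = - ((cmod zC)\<^sup>2 / ((cmod zC)\<^sup>2 + 1))"
      using pos by (simp add: field_simps)
    hence "\<bar>1 / ((cmod zC)\<^sup>2 + 1) - 1\<bar> = (cmod zC)\<^sup>2 / ((cmod zC)\<^sup>2 + 1)"
      using pos by simp
    also have "\<dots> \<le> (cmod zC)\<^sup>2 / 1" by (intro divide_left_mono) (auto intro: add_nonneg_pos)
    also have "\<dots> \<le> \<epsilon>\<^sup>2" using zCb by (simp add: power_mono)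
    also have "\<dots> \<le> \<epsilon>" using e by (simp add: power2_eq_square mult_le_one[THEN order_trans] mult_left_le)
    finally show ?thesis unfolding Ginv mi(1) .
  qed
  show ?thesis unfolding G_def[symmetric]
    apply (rule exI[of _ zm], rule exI[of _ zp])
    apply (intro conjI ne fx rep att)
    apply (rule exI[of _ "(zC,1)"], rule exI[of _ "(zD,1)"])
    using hm(1-3) zCb sp fb sb by auto
qed

definition near :: "real \<Rightarrow> hpt \<Rightarrow> bool" where
  "near \<eta> X \<longleftrightarrow> snd X > 0 \<and> cmod (fst X) \<le> \<eta> \<and> \<bar>snd X - 1\<bar> \<le> \<eta>"

lemma Qd_nonneg: "snd x > 0 \<Longrightarrow> snd y > 0 \<Longrightarrow> Qd x y \<ge> 0"
  by (simp add: Qd_def)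

lemma hdist_less: "snd x > 0 \<Longrightarrow> snd y > 0 \<Longrightarrow> snd u > 0 \<Longrightarrow> snd v > 0 \<Longrightarrow>
   hdist x y < hdist u v \<longleftrightarrow> Qd x y < Qd u v"
  unfolding hdist_Qd using Qd_nonneg[of x y] Qd_nonneg[of u v] by simp

lemma hdist_nonneg: "snd x > 0 \<Longrightarrow> snd y > 0 \<Longrightarrow> hdist x y \<ge> 0"
  unfolding hdist_Qd using Qd_nonneg[of x y] by simp

lemma sq_le_abs: fixes a e :: real assumes "a\<^sup>2 \<le> e\<^sup>2" "e \<ge> 0" shows "\<bar>a\<bar> \<le> e"
  using assms by (metis abs_le_square_iff abs_of_nonneg)

lemma cmp:
  fixes e0 :: real and X Y P :: hpt
  assumes e0: "0 < e0" "e0 \<le> 1/2"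
    and nX: "near (e0/8) X" and nY: "near (e0/8) Y"
    and fP: "snd P > 0" "snd P \<le> 1" "snd P \<le> 1/2 \<or> cmod (fst P) \<ge> e0"
  shows "Qd X (0,1) < Qd Y P"
proof -
  define \<eta> where "\<eta> = e0/8"
  have \<eta>: "0 < \<eta>" "\<eta> \<le> 1/16" using e0 by (simp_all add: \<eta>_def)
  obtain zX hX where X: "X = (zX, hX)" by (cases X)
  obtain zY hY where Y: "Y = (zY, hY)" by (cases Y)
  obtain zP hP where P: "P = (zP, hP)" by (cases P)
  have x: "cmod zX \<le> \<eta>" "\<bar>hX - 1\<bar> \<le> \<eta>" and y: "cmod zY \<le> \<eta>" "\<bar>hY - 1\<bar> \<le> \<eta>"
    using nX nY by (simp_all add: near_def X Y \<eta>_def)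
  have hp: "0 < hP" "hP \<le> 1" "hP \<le> 1/2 \<or> cmod zP \<ge> e0" using fP by (simp_all add: P)
  have hX: "hX \<ge> 1/2" and hY: "hY > 0" "hY \<le> 2" using x y \<eta> by auto
  have "Qd X (0,1) = ((cmod zX)\<^sup>2 + (hX - 1)\<^sup>2) / (2 * hX)" by (simp add: Qd_def X)
  also have "\<dots> \<le> ((cmod zX)\<^sup>2 + (hX - 1)\<^sup>2) / 1" using hX by (intro divide_left_mono) auto
  also have "\<dots> \<le> \<eta>\<^sup>2 + \<eta>\<^sup>2"
  proof -
    have "(cmod zX)\<^sup>2 \<le> \<eta>\<^sup>2" using x(1) by (simp add: power_mono)
    moreover have "(hX - 1)\<^sup>2 \<le> \<eta>\<^sup>2" using power_mono[OF x(2), of 2] by simp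
    ultimately show ?thesis by simp
  qed
  finally have q1: "Qd X (0,1) \<le> 2 * \<eta>\<^sup>2" by simp
  define num where "num = (cmod (zY - zP))\<^sup>2 + (hY - hP)\<^sup>2"
  have numpos: "num \<ge> 0" by (simp add: num_def)
  have q2: "Qd Y P \<ge> num / 4"
  proof -
    have eq: "Qd Y P = num / (2 * hY * hP)" by (simp add: Qd_def Y P num_def)
    have "hY * hP \<le> 2 * 1" using hY hp by (intro mult_mono) auto
    hence l4: "2 * hY * hP \<le> 4" by (simp add: mult.commute)
    have p0: "2 * hY * hP > 0" using hY hp by simp
    have "num / 4 \<le> num / (2 * hY * hP)" by (rule frac_le) (use numpos l4 p0 in auto)
    thus ?thesis unfolding eq .
  qed
  have "num > 8 * \<eta>\<^sup>2"
  proof (cases "hP \<le> 1/2")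
    case True
    have "hY - hP \<ge> 7/16" using y(2) \<eta> True by linarith
    hence "(hY - hP)\<^sup>2 \<ge> (7/16)\<^sup>2" by (intro power_mono) auto
    hence a: "(hY - hP)\<^sup>2 \<ge> 49/256" by (simp add: power_divide)
    have "\<eta>\<^sup>2 \<le> (1/16)\<^sup>2" using \<eta> by (intro power_mono) auto
    hence b: "\<eta>\<^sup>2 \<le> 1/256" by (simp add: power_divide)
    have c: "(cmod (zY - zP))\<^sup>2 \<ge> 0" by simp
    show ?thesis unfolding num_def using a b c by linarith
  next
    case False
    hence zp: "cmod zP \<ge> e0" using hp by simp
    have "cmod zP \<le> cmod (zY - zP) + cmod zY" by (metis norm_minus_commute norm_triangle_sub add.commute)
    hence "cmod (zY - zP) \<ge> 7 * \<eta>" using zp y(1) by (simp add: \<eta>_def)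
    hence "(cmod (zY - zP))\<^sup>2 \<ge> (7 * \<eta>)\<^sup>2" using \<eta> by (intro power_mono) auto
    hence "(cmod (zY - zP))\<^sup>2 \<ge> 49 * \<eta>\<^sup>2" by (simp add: power_mult_distrib)
    moreover have "\<eta>\<^sup>2 > 0" using \<eta> by simp
    ultimately show ?thesis unfolding num_def by (smt (verit) zero_le_power2)
  qed
  thus ?thesis using q1 q2 by linarith
qed

lemma near_seg:
  fixes \<epsilon> :: real and P1 P2 X :: hpt
  assumes e: "0 < \<epsilon>" "\<epsilon> \<le> 1/16"
    and n1: "near \<epsilon> P1" and n2: "near \<epsilon> P2" and X: "X \<in> hseg P1 P2"
  shows "near (7 * \<epsilon>) X"
proof -
  obtain z1 h1 where P1: "P1 = (z1, h1)" by (cases P1)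
  obtain z2 h2 where P2: "P2 = (z2, h2)" by (cases P2)
  obtain zX hX where Xe: "X = (zX, hX)" by (cases X)
  have a1: "cmod z1 \<le> \<epsilon>" "\<bar>h1 - 1\<bar> \<le> \<epsilon>" "h1 > 0" and a2: "cmod z2 \<le> \<epsilon>" "\<bar>h2 - 1\<bar> \<le> \<epsilon>" "h2 > 0"
    using n1 n2 by (simp_all add: near_def P1 P2)
  have hXp: "hX > 0" using X by (simp add: hseg_def H3_def Xe)
  have "hdist P1 X + hdist X P2 = hdist P1 P2" using X by (simp add: hseg_def)
  moreover have "hdist X P2 \<ge> 0" using hXp a2 by (intro hdist_nonneg) (simp_all add: Xe P2)
  ultimately have "hdist P1 X \<le> hdist P1 P2" by simp
  hence "\<not> hdist P1 P2 < hdist P1 X" by simp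
  hence Qle: "Qd P1 X \<le> Qd P1 P2" using hdist_less[of P1 P2 P1 X] a1 a2 hXp by (simp add: P1 P2 Xe)
  have Q12: "Qd P1 P2 \<le> 5 * \<epsilon>\<^sup>2"
  proof -
    have "cmod (z1 - z2) \<le> 2 * \<epsilon>" using a1 a2 norm_triangle_ineq4[of z1 z2] by simp
    hence "(cmod (z1 - z2))\<^sup>2 \<le> (2*\<epsilon>)\<^sup>2" by (intro power_mono) auto
    moreover have "\<bar>h1 - h2\<bar> \<le> 2 * \<epsilon>" using a1 a2 by linarith
    hence "(h1 - h2)\<^sup>2 \<le> (2*\<epsilon>)\<^sup>2" by (metis abs_le_square_iff abs_of_nonneg e(1) mult_nonneg_nonneg zero_le_numeral less_imp_le)
    ultimately have num: "(cmod (z1 - z2))\<^sup>2 + (h1 - h2)\<^sup>2 \<le> 8 * \<epsilon>\<^sup>2" by (simp add: power_mult_distrib)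
    have den: "2 * h1 * h2 \<ge> 2 * (15/16) * (15/16)" using a1 a2 e
      by (intro mult_mono) auto
    have "Qd P1 P2 = ((cmod (z1 - z2))\<^sup>2 + (h1 - h2)\<^sup>2) / (2 * h1 * h2)" by (simp add: Qd_def P1 P2)
    also have "\<dots> \<le> (8 * \<epsilon>\<^sup>2) / (2 * (15/16) * (15/16))"
      using num den by (intro frac_le) auto
    also have "\<dots> \<le> 5 * \<epsilon>\<^sup>2" by simp
    finally show ?thesis .
  qed
  define q where "q = 10 * \<epsilon>\<^sup>2 * h1"
  have qb: "q \<le> 11 * \<epsilon>\<^sup>2" using a1 e by (simp add: q_def)
  have qp: "q \<ge> 0" using a1 by (simp add: q_def)
  have main: "(cmod (z1 - zX))\<^sup>2 + (h1 - hX)\<^sup>2 \<le> q * hX"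
  proof -
    have "((cmod (z1 - zX))\<^sup>2 + (h1 - hX)\<^sup>2) / (2 * h1 * hX) \<le> 5 * \<epsilon>\<^sup>2"
      using Qle Q12 by (simp add: Qd_def P1 Xe)
    thus ?thesis using a1 hXp by (simp add: q_def divide_le_eq algebra_simps)
  qed
  have hX2: "hX < 2"
  proof (rule ccontr)
    assume "\<not> hX < 2"
    hence h2: "hX \<ge> 2" by simp
    have "hX - h1 \<ge> hX / 4" using h2 a1 e by linarith
    hence "(hX - h1)\<^sup>2 \<ge> (hX/4)\<^sup>2" by (intro power_mono) (use h2 in auto)
    hence "(h1 - hX)\<^sup>2 \<ge> hX * hX / 16" by (simp add: power2_eq_square algebra_simps)
    hence "hX * hX / 16 \<le> q * hX" using main by (smt (verit) zero_le_power2)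
    hence "hX \<le> 16 * q" using h2 by (simp add: field_simps)
    moreover have "16 * q \<le> 16 * 11 * \<epsilon>\<^sup>2" using qb by simp
    moreover have "\<epsilon>\<^sup>2 \<le> (1/16)\<^sup>2" using e by (intro power_mono) auto
    hence "\<epsilon>\<^sup>2 \<le> 1/256" by (simp add: power_divide)
    ultimately show False using h2 by simp
  qed
  have bnd: "(cmod (z1 - zX))\<^sup>2 + (h1 - hX)\<^sup>2 \<le> 22 * \<epsilon>\<^sup>2"
  proof -
    have "q * hX \<le> q * 2" using hX2 qp by (intro mult_left_mono) auto
    thus ?thesis using main qb by linarith
  qed
  have "(cmod (z1 - zX))\<^sup>2 \<le> (6*\<epsilon>)\<^sup>2" using bnd by (simp add: power_mult_distrib) (smt (verit) zero_le_power2)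
  hence "\<bar>cmod (z1 - zX)\<bar> \<le> 6 * \<epsilon>" using e by (intro sq_le_abs) auto
  hence d1: "cmod (z1 - zX) \<le> 6 * \<epsilon>" by simp
  have "(h1 - hX)\<^sup>2 \<le> (6*\<epsilon>)\<^sup>2" using bnd by (simp add: power_mult_distrib) (smt (verit) zero_le_power2)
  hence d2: "\<bar>h1 - hX\<bar> \<le> 6 * \<epsilon>" using e by (intro sq_le_abs) auto
  have "cmod zX \<le> cmod z1 + cmod (z1 - zX)" by (metis norm_triangle_sub norm_minus_commute add.commute)
  hence "cmod zX \<le> 7 * \<epsilon>" using d1 a1 by linarith
  moreover have "\<bar>hX - 1\<bar> \<le> 7 * \<epsilon>" using d2 a1 by linarith
  ultimately show ?thesis using hXp by (simp add: near_def Xe)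
qed

lemma mob_pos:
  assumes det: "det \<gamma> = 1" and h: "snd x > 0"
  shows "snd (mob \<gamma> x) > 0"
proof -
  obtain a b c d where gm: "\<gamma> = mat2 a b c d" using mat2_eta by blast
  have det1: "a*d - b*c = 1" using det by (simp add: gm det_mat2)
  have "(cmod (c * fst x + d))\<^sup>2 + (cmod c)\<^sup>2 * (snd x)\<^sup>2 > 0"
  proof (cases "c = 0")
    case True
    hence "d \<noteq> 0" using det1 by auto
    thus ?thesis using True by simp
  next
    case False
    thus ?thesis using h by (simp add: add_nonneg_pos)
  qed
  thus ?thesis using h by (simp add: mob_snd gm mat2_nth)
qed

theorem lemma4p2:
  fixes \<Gamma> :: "cmat set" and t\<alpha> t\<beta> c b00 :: complex and x0 y0 :: real and g :: cmat
  assumes grp: "psl2_group \<Gamma>"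
    and disc: "discrete \<Gamma>"
    and tf: "torsion_free \<Gamma>"
    and finvol: "finite_covolume \<Gamma>"
    and indep: "\<forall>r s :: real. complex_of_real r * t\<alpha> + complex_of_real s * t\<beta> = 0 \<longrightarrow> r = 0 \<and> s = 0"
    and stab: "\<forall>\<gamma>\<in>\<Gamma>. \<gamma>$2$1 = 0 \<longleftrightarrow>
                 (\<exists>p q :: int. \<gamma> = transl (of_int p * t\<alpha> + of_int q * t\<beta>)
                             \<or> \<gamma> = - transl (of_int p * t\<alpha> + of_int q * t\<beta>))"
    and horoball: "\<forall>\<gamma>\<in>\<Gamma>. mob \<gamma> ` Binf = Binf \<or> mob \<gamma> ` Binf \<inter> Binf = {}"
    and b00: "b00 = complex_of_real x0 * t\<alpha> + complex_of_real y0 * t\<beta>"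
    and x0: "0 \<le> x0" "x0 < 1" and y0: "0 \<le> y0" "y0 < 1" and nz: "\<not> (x0 = 0 \<and> y0 = 0)"
    and g_def: "g = mat2 (c * b00) (- 1 / c) c 0"
    and g_in: "g \<in> \<Gamma>"
    and gH0: "mob g ` H0 = Hinf"
    and gA: "mob g (0, 1) = (b00, 1)"
  shows "\<exists>N0::real. \<forall>p q :: int. sqrt (real_of_int (p\<^sup>2 + q\<^sup>2)) > N0 \<longrightarrow>
           (let G = transl (of_int p * t\<alpha> + of_int q * t\<beta>) ** g in
            \<exists>zm zp. zm \<noteq> zp \<and> {z. bfix G z} = {zm, zp} \<and> rep_fix G zm \<and> att_fix G zp \<and>
              (\<exists>C D. hline zm zp \<inter> Hinf = {C, D} \<and> C \<noteq> D \<and>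
                 cmod (fst C - zm) < cmod (fst D - zm) \<and>
                 hseg (mob (matrix_inv G) D) C \<subseteq> Rregion \<Gamma> (0, 1) \<and>
                 embeds_mod \<Gamma> (hseg (mob (matrix_inv G) D) C)))"
proof -
  have "snd (mob g (0,1)) = 1" using gA by simp
  hence "1 / (cmod c)\<^sup>2 = 1" by (simp add: mob_snd g_def mat2_nth)
  hence "(cmod c)\<^sup>2 = 1" by (simp add: divide_eq_1_iff)
  hence c1: "cmod c = 1" using norm_ge_zero[of c] by (simp add: power2_eq_1_iff)
  obtain K where K: "K > 0" "\<And>r s. cmod (complex_of_real r * t\<alpha> + complex_of_real s * t\<beta>) \<ge> K * sqrt (r\<^sup>2 + s\<^sup>2)"
    using lattice_bound[OF indep] by blast
  have Kint: "cmod (of_int p * t\<alpha> + of_int q * t\<beta>) \<ge> K * sqrt (real_of_int (p\<^sup>2 + q\<^sup>2))" for p q :: int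
    using K(2)[of "real_of_int p" "real_of_int q"] by simp
  have lat: "\<forall>p q :: int. (p, q) \<noteq> (0, 0) \<longrightarrow> cmod (of_int p * t\<alpha> + of_int q * t\<beta>) \<ge> K"
  proof (intro allI impI)
    fix p q :: int assume "(p,q) \<noteq> (0,0)"
    hence "p\<^sup>2 + q\<^sup>2 \<ge> 1"
      by (smt (verit) prod.inject zero_le_power2 power2_less_eq_zero_iff zle_add1_eq_le)
    hence "real_of_int (p\<^sup>2 + q\<^sup>2) \<ge> 1" by (metis of_int_1 of_int_le_iff)
    hence "sqrt (real_of_int (p\<^sup>2 + q\<^sup>2)) \<ge> sqrt 1" by (rule real_sqrt_le_mono)
    hence "sqrt (real_of_int (p\<^sup>2 + q\<^sup>2)) \<ge> 1" by (simp only: real_sqrt_one)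
    hence "K * sqrt (real_of_int (p\<^sup>2 + q\<^sup>2)) \<ge> K" using K(1) by simp
    thus "cmod (of_int p * t\<alpha> + of_int q * t\<beta>) \<ge> K" using Kint[of p q] by linarith
  qed
  define e0 where "e0 = min K (1/2)"
  define \<epsilon> where "\<epsilon> = e0 / 8 / 7"
  have e0: "0 < e0" "e0 \<le> 1/2" using K(1) by (auto simp: e0_def)
  have e: "0 < \<epsilon>" "\<epsilon> \<le> 1/16" "\<epsilon> \<le> 1" using e0 by (auto simp: \<epsilon>_def)
  have e7: "7 * \<epsilon> = e0 / 8" by (simp add: \<epsilon>_def)
  define N0 where "N0 = (4 + 4/\<epsilon> + cmod b00) / K"
  have sepA: "\<And>\<gamma>. \<gamma> \<in> \<Gamma> \<Longrightarrow> \<gamma> = mat 1 \<or> \<gamma> = - mat 1 \<or>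
     (snd (mob \<gamma> (0,1)) \<le> 1 \<and> (snd (mob \<gamma> (0,1)) \<le> 1/2 \<or> cmod (fst (mob \<gamma> (0,1))) \<ge> e0))"
    unfolding e0_def by (rule sep[OF grp tf stab horoball g_def g_in c1 lat])
  have detG: "\<And>\<gamma>. \<gamma> \<in> \<Gamma> \<Longrightarrow> det \<gamma> = 1" using grp by (simp add: psl2_group_def)
  show ?thesis
  proof (intro exI[of _ N0] allI impI)
    fix p q :: int
    assume pq: "sqrt (real_of_int (p\<^sup>2 + q\<^sup>2)) > N0"
    define t where "t = of_int p * t\<alpha> + of_int q * t\<beta>"
    define b where "b = b00 + t"
    have "cmod t \<ge> K * sqrt (real_of_int (p\<^sup>2 + q\<^sup>2))" using Kint t_def by simp
    moreover have "K * sqrt (real_of_int (p\<^sup>2 + q\<^sup>2)) > K * N0" using pq K(1) by simp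
    moreover have "K * N0 = 4 + 4/\<epsilon> + cmod b00" using K(1) by (simp add: N0_def)
    ultimately have tb: "cmod t > 4 + 4/\<epsilon> + cmod b00" by linarith
    have "cmod t \<le> cmod b + cmod b00" using norm_triangle_ineq4[of b b00] by (simp add: b_def)
    hence bb: "cmod b \<ge> 4 + 4/\<epsilon>" using tb by linarith
    have Geq: "transl t ** g = mat2 (c*b) (-1/c) c 0"
      by (simp add: g_def transl_mult mat2_eq b_def algebra_simps)
    obtain zm zp where Z: "zm \<noteq> zp" "{z. bfix (mat2 (c*b) (-1/c) c 0) z} = {zm, zp}"
      "rep_fix (mat2 (c*b) (-1/c) c 0) zm" "att_fix (mat2 (c*b) (-1/c) c 0) zp"
      and CD: "\<exists>C D. hline zm zp \<inter> Hinf = {C, D} \<and> C \<noteq> D \<and> cmod (fst C - zm) < cmod (fst D - zm) \<and>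
         snd C = 1 \<and> cmod (fst C) \<le> \<epsilon> \<and>
         snd (mob (matrix_inv (mat2 (c*b) (-1/c) c 0)) D) > 0 \<and>
         cmod (fst (mob (matrix_inv (mat2 (c*b) (-1/c) c 0)) D)) \<le> \<epsilon> \<and>
         \<bar>snd (mob (matrix_inv (mat2 (c*b) (-1/c) c 0)) D) - 1\<bar> \<le> \<epsilon>"
      using constr[OF c1 e(1) e(3) bb] by blast
    obtain C D where C: "hline zm zp \<inter> Hinf = {C, D}" "C \<noteq> D" "cmod (fst C - zm) < cmod (fst D - zm)"
      "snd C = 1" "cmod (fst C) \<le> \<epsilon>"
      "snd (mob (matrix_inv (mat2 (c*b) (-1/c) c 0)) D) > 0"
      "cmod (fst (mob (matrix_inv (mat2 (c*b) (-1/c) c 0)) D)) \<le> \<epsilon>"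
      "\<bar>snd (mob (matrix_inv (mat2 (c*b) (-1/c) c 0)) D) - 1\<bar> \<le> \<epsilon>"
      using CD by blast
    define P1 where "P1 = mob (matrix_inv (mat2 (c*b) (-1/c) c 0)) D"
    have n1: "near \<epsilon> P1" using C(6-8) by (simp add: near_def P1_def)
    have n2: "near \<epsilon> C" using C(4,5) e by (simp add: near_def)
    have nX: "near (e0/8) X" if "X \<in> hseg P1 C" for X
      using near_seg[OF e(1) e(2) n1 n2 that] e7 by simp
    have XH: "snd X > 0" if "X \<in> hseg P1 C" for X using that by (simp add: hseg_def H3_def)
    have Rr: "hseg P1 C \<subseteq> Rregion \<Gamma> (0, 1)"
    proof
      fix X assume X: "X \<in> hseg P1 C"
      have "hdist X (0,1) < hdist X (mob \<gamma> (0,1))" if g: "\<gamma> \<in> \<Gamma>" and ne: "mob \<gamma> (0,1) \<noteq> (0,1)" for \<gamma>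
      proof -
        have "\<gamma> \<noteq> mat 1 \<and> \<gamma> \<noteq> - mat 1" using ne mob_id by auto
        hence f: "snd (mob \<gamma> (0,1)) \<le> 1" "snd (mob \<gamma> (0,1)) \<le> 1/2 \<or> cmod (fst (mob \<gamma> (0,1))) \<ge> e0"
          using sepA[OF g] by auto
        have pp: "snd (mob \<gamma> (0,1)) > 0" using mob_pos[OF detG[OF g]] by simp
        have "Qd X (0,1) < Qd X (mob \<gamma> (0,1))" by (rule cmp[OF e0 nX[OF X] nX[OF X] pp f])
        thus ?thesis using hdist_less[of X "(0,1)" X "mob \<gamma> (0,1)"] XH[OF X] pp by simp
      qed
      moreover have "X \<in> H3" using X by (simp add: hseg_def)
      ultimately show "X \<in> Rregion \<Gamma> (0, 1)" by (simp add: Rregion_def)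
    qed
    have Em: "embeds_mod \<Gamma> (hseg P1 C)"
      unfolding embeds_mod_def
    proof (intro ballI impI)
      fix x y assume x: "x \<in> hseg P1 C" and y: "y \<in> hseg P1 C" and ex: "\<exists>\<gamma>\<in>\<Gamma>. mob \<gamma> x = y"
      then obtain \<gamma> where g: "\<gamma> \<in> \<Gamma>" and gy: "mob \<gamma> x = y" by blast
      show "x = y"
      proof (cases "\<gamma> = mat 1 \<or> \<gamma> = - mat 1")
        case True thus ?thesis using gy mob_id(1)[of x] mob_id(2)[of x] by auto
      next
        case False
        hence f: "snd (mob \<gamma> (0,1)) \<le> 1" "snd (mob \<gamma> (0,1)) \<le> 1/2 \<or> cmod (fst (mob \<gamma> (0,1))) \<ge> e0"
          using sepA[OF g] by auto
        have pp: "snd (mob \<gamma> (0,1)) > 0" using mob_pos[OF detG[OF g]] by simp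
        have "Qd x (0,1) < Qd y (mob \<gamma> (0,1))" by (rule cmp[OF e0 nX[OF x] nX[OF y] pp f])
        moreover have "Qd y (mob \<gamma> (0,1)) = Qd x (0,1)"
          using iso[OF detG[OF g] XH[OF x], of "(0,1)"] gy by simp
        ultimately show ?thesis by simp
      qed
    qed
    show "let G = transl (of_int p * t\<alpha> + of_int q * t\<beta>) ** g in
            \<exists>zm zp. zm \<noteq> zp \<and> {z. bfix G z} = {zm, zp} \<and> rep_fix G zm \<and> att_fix G zp \<and>
              (\<exists>C D. hline zm zp \<inter> Hinf = {C, D} \<and> C \<noteq> D \<and>
                 cmod (fst C - zm) < cmod (fst D - zm) \<and>
                 hseg (mob (matrix_inv G) D) C \<subseteq> Rregion \<Gamma> (0, 1) \<and>
                 embeds_mod \<Gamma> (hseg (mob (matrix_inv G) D) C))"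
      unfolding Let_def t_def[symmetric] Geq
      using Z C(1-3) Rr Em unfolding P1_def by blast
  qed
qed

end
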